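(* In the full-information matching model described in the context, under the ACR policy $\pi^{\mathrm{ACR}}$, for every time horizon $T\ge0$, every initial state $A\in\mathbb{Z}_{\ge0}^{\ell+1}$ and every $i\in\mathcal{L}$, $$1+\mathbb{E}[M^{\pi^{\mathrm{ACR}}}(T)\mid A^{(0)}=A]\ \ge\ \mathbb{E}[M^{\pi^{\mathrm{ACR}}}(T)\mid A^{(0)}=A+e_0]\ \ge\ \mathbb{E}[M^{\pi^{\mathrm{ACR}}}(T)\mid A^{(0)}=A+e_i],$$ where $e_i\in\mathbb{Z}_{\ge0}^{\ell+1}$ is the $i$-th unit vector.
   Context: Job/agent types are $\mathcal{L}=\{0,1,\dots,\ell\}$. Agents of type $i$ arrive by a Poisson process of rate $\lambda_i>0$, jobs of type $j$ by a Poisson process of rate $\mu_j>0$, all independent. A type $0$ agent can fulfill every job type; a type $i\ge1$ agent only type $i$ jobs. Unmatched jobs are lost at arrival. Waiting agents abandon independently at exponential rate $\theta>0$; matched agents leave. The state $A=(A_0,\dots,A_\ell)$ counts waiting agents of each type, $A^{(0)}$ is the initial state, and $M^\pi(T)$ is the number of matches in $[0,T]$ under policy $\pi$. The ACR policy assigns an arriving type $j$ job to a uniformly random waiting type $j$ agent if one exists, otherwise to a uniformly random waiting type $0$ agent if one exists, otherwise the job is lost. *)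

theory Defs
  imports "HOL-Analysis.Analysis"
begin

text \<open>States: A :: nat => nat, coordinates 0..l are the queue lengths of waiting
agents of each type.  Parameters: l (number of specialised types), lam, mu
(arrival rates of agents / jobs), th (abandonment rate).\<close>

definition acr_job :: "nat \<Rightarrow> (nat \<Rightarrow> nat) \<Rightarrow> nat \<times> (nat \<Rightarrow> nat)" where
  "acr_job j A =
     (if A j > 0 then (1, A(j := A j - 1))
      else if A 0 > 0 then (1, A(0 := A 0 - 1))
      else (0, A))"

text \<open>All transitions of the ACR-controlled chain from state A:
  (rate, reward = number of matches, successor state).\<close>
definition acr_trans ::
  "nat \<Rightarrow> (nat \<Rightarrow> real) \<Rightarrow> (nat \<Rightarrow> real) \<Rightarrow> real \<Rightarrow> (nat \<Rightarrow> nat)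
     \<Rightarrow> (real \<times> nat \<times> (nat \<Rightarrow> nat)) list" where
  "acr_trans l lam mu th A =
     map (\<lambda>i. (lam i, 0, A(i := A i + 1))) [0..<Suc l]
   @ map (\<lambda>j. (mu j, fst (acr_job j A), snd (acr_job j A))) [0..<Suc l]
   @ map (\<lambda>i. (th * real (A i), 0, A(i := A i - 1))) [0..<Suc l]"

definition acr_rate ::
  "nat \<Rightarrow> (nat \<Rightarrow> real) \<Rightarrow> (nat \<Rightarrow> real) \<Rightarrow> real \<Rightarrow> (nat \<Rightarrow> nat) \<Rightarrow> real" where
  "acr_rate l lam mu th A = (\<Sum>(r, _, _) \<leftarrow> acr_trans l lam mu th A. r)"

text \<open>Expected number of matches in [0,t] counting only the first n jumps of the
  chain started in A (first-jump decomposition: the first jump happens at an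
  Exp(q) time s, and takes transition (r,k,B) with probability r/q).\<close>
fun acr_EM_n ::
  "nat \<Rightarrow> (nat \<Rightarrow> real) \<Rightarrow> (nat \<Rightarrow> real) \<Rightarrow> real \<Rightarrow> nat \<Rightarrow> real \<Rightarrow> (nat \<Rightarrow> nat) \<Rightarrow> real" where
  "acr_EM_n l lam mu th 0 t A = 0"
| "acr_EM_n l lam mu th (Suc n) t A =
     integral {0..t} (\<lambda>s. exp (- acr_rate l lam mu th A * s) *
        (\<Sum>(r, k, B) \<leftarrow> acr_trans l lam mu th A.
            r * (real k + acr_EM_n l lam mu th n (t - s) B)))"

text \<open>E[M^ACR(t) | A(0) = A]: limit (supremum) over the number of jumps.\<close>
definition acr_EM ::
  "nat \<Rightarrow> (nat \<Rightarrow> real) \<Rightarrow> (nat \<Rightarrow> real) \<Rightarrow> real \<Rightarrow> real \<Rightarrow> (nat \<Rightarrow> nat) \<Rightarrow> real" where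
  "acr_EM l lam mu th t A = (SUP n. acr_EM_n l lam mu th n t A)"

definition add_unit :: "(nat \<Rightarrow> nat) \<Rightarrow> nat \<Rightarrow> (nat \<Rightarrow> nat)" where
  "add_unit A i = A(i := A i + 1)"

end

theory Submission
  imports Defs
begin


definition cnv :: "real \<Rightarrow> (real \<Rightarrow> real) \<Rightarrow> real \<Rightarrow> real" where
  "cnv p f t = integral {0..t} (\<lambda>s. exp (- p * s) * f (t - s))"

lemma integral_flip:
  fixes g :: "real \<Rightarrow> real"
  shows "integral {0..t} (\<lambda>s. g (t - s)) = integral {0..t} g"
proof -
  have "integral {0..t} (\<lambda>s. g (t - s)) = integral {- 0 .. - (- t)} (\<lambda>x. (\<lambda>y. g (y + t)) (- x))"
    by simp
  also have "\<dots> = integral {0 - t .. t - t} (\<lambda>y. g (y + t))"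
    using Henstock_Kurzweil_Integration.integral_reflect_real[of 0 "- t" "\<lambda>y. g (y + t)"] by simp
  also have "\<dots> = integral {0..t} g" by (rule integral_shift_real_ivl)
  finally show ?thesis .
qed

lemma cnv_repr:
  "cnv p f t = exp (- p * t) * integral {0..t} (\<lambda>u. exp (p * u) * f u)"
proof -
  have "cnv p f t = integral {0..t} (\<lambda>s. (\<lambda>u. exp (- p * (t - u)) * f u) (t - s))"
    unfolding cnv_def by simp
  also have "\<dots> = integral {0..t} (\<lambda>u. exp (- p * t) * (exp (p * u) * f u))"
    by (subst integral_flip) (simp add: algebra_simps exp_add[symmetric])
  also have "\<dots> = exp (- p * t) * integral {0..t} (\<lambda>u. exp (p * u) * f u)"
    by simp
  finally show ?thesis .
qed

lemma cnv_fun: "cnv p f = (\<lambda>t. exp (- p * t) * integral {0..t} (\<lambda>u. exp (p * u) * f u))"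
  using cnv_repr by blast

lemma cnv_cont:
  assumes "continuous_on {0..T} f"
  shows "continuous_on {0..T} (cnv p f)"
proof -
  have "(\<lambda>u. exp (p * u) * f u) integrable_on {0..T}"
    by (intro integrable_continuous_real continuous_intros assms)
  then have "continuous_on {0..T} (\<lambda>t. integral {0..t} (\<lambda>u. exp (p * u) * f u))"
    by (rule indefinite_integral_continuous_1)
  then show ?thesis unfolding cnv_fun
    by (intro continuous_intros)
qed

lemma cnv_mono:
  assumes "continuous_on {0..t} f" "continuous_on {0..t} g" "\<And>u. u \<in> {0..t} \<Longrightarrow> f u \<le> g u"
  shows "cnv p f t \<le> cnv p g t"
  unfolding cnv_repr
proof (rule mult_left_mono)
  show "integral {0..t} (\<lambda>u. exp (p * u) * f u) \<le> integral {0..t} (\<lambda>u. exp (p * u) * g u)"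
    by (intro integral_le integrable_continuous_real continuous_intros assms)
       (simp add: assms(3))
qed simp

lemma cnv_add:
  assumes "continuous_on {0..t} f" "continuous_on {0..t} g"
  shows "cnv p (\<lambda>u. f u + g u) t = cnv p f t + cnv p g t"
  unfolding cnv_repr
  by (simp add: distrib_left integral_add integrable_continuous_real continuous_intros assms)

lemma cnv_cmult:
  shows "cnv p (\<lambda>u. c * f u) t = c * cnv p f t"
  unfolding cnv_def by (simp add: algebra_simps)

lemma cnv_const:
  assumes "0 \<le> t"
  shows "cnv Q (\<lambda>_. Q) t = 1 - exp (- Q * t)"
proof -
  have "((\<lambda>s. exp (- Q * s) * Q) has_integral ((\<lambda>s. - exp (- Q * s)) t - (\<lambda>s. - exp (- Q * s)) 0)) {0..t}"
    using assms
    by (intro fundamental_theorem_of_calculus)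
       (auto intro!: derivative_eq_intros simp: has_real_derivative_iff_has_vector_derivative[symmetric])
  then have "integral {0..t} (\<lambda>s. exp (- Q * s) * Q) = 1 - exp (- Q * t)"
    by (intro integral_unique) simp
  then show ?thesis unfolding cnv_def by simp
qed

lemma cnv_lin:
  assumes "0 \<le> t"
  shows "cnv q (\<lambda>u. M + q * M * u) t = M * t"
proof -
  have "((\<lambda>s. exp (- q * s) * (M + q * M * (t - s))) has_integral
       ((\<lambda>s. - exp (- q * s) * M * (t - s)) t - (\<lambda>s. - exp (- q * s) * M * (t - s)) 0)) {0..t}"
    using assms
    by (intro fundamental_theorem_of_calculus)
       (auto intro!: derivative_eq_intros simp: has_real_derivative_iff_has_vector_derivative[symmetric] algebra_simps)
  then have "integral {0..t} (\<lambda>s. exp (- q * s) * (M + q * M * (t - s))) = M * t"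
    by (intro integral_unique) simp
  then show ?thesis unfolding cnv_def by simp
qed

lemma cnv_resolvent:
  assumes "0 \<le> t" "continuous_on {0..t} b"
  shows "cnv (q + c) (\<lambda>u. b u + c * cnv q b u) t = cnv q b t"
proof -
  define I where "I = (\<lambda>u. integral {0..u} (\<lambda>v. exp (q * v) * b v))"
  have cI: "continuous_on {0..t} (\<lambda>v. exp (q * v) * b v)"
    by (intro continuous_intros assms)
  have dI: "(I has_vector_derivative exp (q * x) * b x) (at x within {0..t})" if "x \<in> {0..t}" for x
    unfolding I_def using integral_has_vector_derivative[OF cI that] by simp
  have "((\<lambda>u. c * exp (c * u) * I u + exp (c * u) * (exp (q * u) * b u)) has_integral
       ((\<lambda>u. exp (c * u) * I u) t - (\<lambda>u. exp (c * u) * I u) 0)) {0..t}"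
  proof (rule fundamental_theorem_of_calculus[OF assms(1)])
    fix x assume x: "x \<in> {0..t}"
    have "((\<lambda>u. exp (c * u)) has_vector_derivative c * exp (c * x)) (at x within {0..t})"
      by (auto intro!: derivative_eq_intros simp: has_real_derivative_iff_has_vector_derivative[symmetric])
    from has_vector_derivative_mult[OF this dI[OF x]]
    show "((\<lambda>u. exp (c * u) * I u) has_vector_derivative
        c * exp (c * x) * I x + exp (c * x) * (exp (q * x) * b x)) (at x within {0..t})"
      by (simp add: algebra_simps)
  qed
  then have "integral {0..t} (\<lambda>u. c * exp (c * u) * I u + exp (c * u) * (exp (q * u) * b u)) = exp (c * t) * I t"
    by (intro integral_unique) (simp add: I_def)
  moreover have "(\<lambda>u. exp ((q + c) * u) * (b u + c * cnv q b u)) = (\<lambda>u. c * exp (c * u) * I u + exp (c * u) * (exp (q * u) * b u))"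
  proof (rule ext)
    fix u
    have e1: "exp ((q + c) * u) = exp (c * u) * exp (q * u)"
      by (simp add: mult_exp_exp distrib_right add.commute)
    have e2: "exp ((q + c) * u) * exp (- q * u) = exp (c * u)"
      by (simp add: mult_exp_exp algebra_simps)
    have "exp ((q + c) * u) * (b u + c * cnv q b u) = exp ((q + c) * u) * b u + c * (exp ((q + c) * u) * exp (- q * u)) * I u"
      by (simp add: cnv_repr I_def algebra_simps)
    also have "\<dots> = c * exp (c * u) * I u + exp (c * u) * (exp (q * u) * b u)"
      by (simp only: e1 e2) (simp add: algebra_simps mult_exp_exp)
    finally show "exp ((q + c) * u) * (b u + c * cnv q b u) = c * exp (c * u) * I u + exp (c * u) * (exp (q * u) * b u)" .
  qed
  ultimately have II: "integral {0..t} (\<lambda>u. exp ((q + c) * u) * (b u + c * cnv q b u)) = exp (c * t) * I t"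
    by simp
  have EE: "exp (- (q + c) * t) * exp (c * t) = exp (- q * t)"
    by (simp add: mult_exp_exp algebra_simps)
  have "cnv (q + c) (\<lambda>u. b u + c * cnv q b u) t
      = exp (- (q + c) * t) * integral {0..t} (\<lambda>u. exp ((q + c) * u) * (b u + c * cnv q b u))"
    by (rule cnv_repr)
  also have "\<dots> = (exp (- (q + c) * t) * exp (c * t)) * I t"
    by (simp only: II mult.assoc)
  also have "\<dots> = cnv q b t"
    by (simp only: EE cnv_repr[of q b t] I_def)
  finally show ?thesis .
qed

lemma cnv_compare:
  assumes "0 \<le> t" "0 \<le> K" "continuous_on {0..t} a" "continuous_on {0..t} b"
    and "\<And>u. u \<in> {0..t} \<Longrightarrow> a u \<le> (q + c) * K + b u + c * cnv q b u"
  shows "cnv (q + c) a t \<le> K + cnv q b t"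
proof -
  have cb: "continuous_on {0..t} (cnv q b)" by (rule cnv_cont[OF assms(4)])
  have "cnv (q + c) a t \<le> cnv (q + c) (\<lambda>u. K * (q + c) + (b u + c * cnv q b u)) t"
  proof (rule cnv_mono)
    show "continuous_on {0..t} (\<lambda>u. K * (q + c) + (b u + c * cnv q b u))"
      by (intro continuous_intros assms cb)
    fix u assume "u \<in> {0..t}"
    from assms(5)[OF this] show "a u \<le> K * (q + c) + (b u + c * cnv q b u)"
      by (simp add: mult.commute)
  qed (rule assms(3))
  also have "\<dots> = cnv (q + c) (\<lambda>u. K * (q + c)) t + cnv (q + c) (\<lambda>u. b u + c * cnv q b u) t"
    by (rule cnv_add) (auto intro!: continuous_intros assms cb)
  also have "cnv (q + c) (\<lambda>u. K * (q + c)) t = K * (1 - exp (- (q + c) * t))"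
    using cnv_cmult[of "q + c" K "\<lambda>_. q + c" t] cnv_const[OF assms(1), of "q + c"] by simp
  also have "cnv (q + c) (\<lambda>u. b u + c * cnv q b u) t = cnv q b t"
    by (rule cnv_resolvent[OF assms(1,4)])
  finally have "cnv (q + c) a t \<le> K * (1 - exp (- (q + c) * t)) + cnv q b t" .
  moreover have "K * (1 - exp (- (q + c) * t)) \<le> K"
    using assms(2) by (simp add: mult_left_le)
  ultimately show ?thesis by linarith
qed



definition term_k :: "nat \<Rightarrow> (nat \<Rightarrow> real) \<Rightarrow> (nat \<Rightarrow> real) \<Rightarrow> real \<Rightarrow> nat \<Rightarrow> real \<Rightarrow> (nat \<Rightarrow> nat) \<Rightarrow> nat \<Rightarrow> real" where
  "term_k l lam mu th n u A k =
     lam k * acr_EM_n l lam mu th n u (A(k := A k + 1))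
   + mu k * (real (fst (acr_job k A)) + acr_EM_n l lam mu th n u (snd (acr_job k A)))
   + th * real (A k) * acr_EM_n l lam mu th n u (A(k := A k - 1))"

definition hh where
  "hh l lam mu th n A u = (\<Sum>k\<le>l. term_k l lam mu th n u A k)"

lemma sum_list_upt_Suc: "sum_list (map f [0..<Suc l]) = (\<Sum>k\<le>l. f k)"
  by (simp only: interv_sum_list_conv_sum_set_nat set_upt atLeast0LessThan lessThan_Suc_atMost)

lemma rate_eq: "acr_rate l lam mu th A = (\<Sum>k\<le>l. lam k + mu k + th * real (A k))"
  unfolding acr_rate_def acr_trans_def
  by (simp add: sum_list_upt_Suc o_def sum.distrib del: upt_Suc)

lemma trans_sum: "(\<Sum>(r, k, B) \<leftarrow> acr_trans l lam mu th A. r * (real k + acr_EM_n l lam mu th n u B))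
   = hh l lam mu th n A u"
  unfolding acr_trans_def hh_def term_k_def
  by (simp add: sum_list_upt_Suc o_def sum.distrib case_prod_beta distrib_left del: upt_Suc)

lemma E_Suc: "acr_EM_n l lam mu th (Suc n) t A = cnv (acr_rate l lam mu th A) (hh l lam mu th n A) t"
  unfolding cnv_def by (simp add: trans_sum)

lemma E_neg: "t < 0 \<Longrightarrow> acr_EM_n l lam mu th n t A = 0"
  by (cases n) simp_all

lemma E_cont: "continuous_on {0..T} (\<lambda>t. acr_EM_n l lam mu th n t A)"
proof (induction n arbitrary: A T)
  case 0
  then show ?case by simp
next
  case (Suc n)
  have "continuous_on {0..T} (hh l lam mu th n A)"
    unfolding hh_def term_k_def
    by (intro continuous_intros Suc)
  then show ?case unfolding E_Suc by (rule cnv_cont)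
qed

lemma rate_add: "j \<le> l \<Longrightarrow> acr_rate l lam mu th (add_unit A j) = acr_rate l lam mu th A + th"
proof -
  assume j: "j \<le> l"
  have "(\<Sum>k\<le>l. lam k + mu k + th * real (add_unit A j k))
      = (\<Sum>k\<le>l. (lam k + mu k + th * real (A k)) + (if k = j then th else 0))"
    by (rule sum.cong) (auto simp: add_unit_def algebra_simps)
  also have "\<dots> = (\<Sum>k\<le>l. lam k + mu k + th * real (A k)) + th"
    using j by (simp add: sum.distrib)
  finally show ?thesis by (simp add: rate_eq)
qed

lemma cnv_zero: "cnv p (\<lambda>_. 0) t = 0"
  unfolding cnv_def by simp

context
  fixes l :: nat and lam mu :: "nat \<Rightarrow> real" and th :: real
  assumes lam_pos: "\<forall>k\<le>l. lam k > 0" and mu_pos: "\<forall>k\<le>l. mu k > 0" and th_pos: "th > 0"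
begin

abbreviation E where "E n t A \<equiv> acr_EM_n l lam mu th n t A"

lemma E_nonneg: "0 \<le> E n t A"
proof (induction n arbitrary: t A)
  case 0
  then show ?case by simp
next
  case (Suc n)
  show ?case
  proof (cases "t < 0")
    case True
    then show ?thesis by (simp add: E_neg)
  next
    case False
    have "0 = cnv (acr_rate l lam mu th A) (\<lambda>_. 0) t" by (simp add: cnv_zero)
    also have "\<dots> \<le> cnv (acr_rate l lam mu th A) (hh l lam mu th n A) t"
    proof (rule cnv_mono)
      show "continuous_on {0..t} (hh l lam mu th n A)"
        unfolding hh_def term_k_def by (intro continuous_intros E_cont)
      fix u assume "u \<in> {0..t}"
      show "0 \<le> hh l lam mu th n A u"
        unfolding hh_def term_k_def
        using lam_pos mu_pos th_pos Suc
        by (intro sum_nonneg add_nonneg_nonneg mult_nonneg_nonneg) auto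
    qed simp
    finally show ?thesis by (simp only: E_Suc)
  qed
qed

lemma hh_cont: "continuous_on {0..t} (hh l lam mu th n A)"
  unfolding hh_def term_k_def by (intro continuous_intros E_cont)

lemma E_mono: "E n t A \<le> E (Suc n) t A"
proof (induction n arbitrary: t A)
  case 0
  then show ?case using E_nonneg[of "Suc 0" t A] by simp
next
  case (Suc n)
  show ?case
  proof (cases "t < 0")
    case True
    then show ?thesis by (simp add: E_neg)
  next
    case False
    show ?thesis
      unfolding E_Suc[of _ _ _ _ "Suc n"] E_Suc[of _ _ _ _ n]
    proof (rule cnv_mono[OF hh_cont hh_cont])
      fix u assume "u \<in> {0..t}"
      show "hh l lam mu th n A u \<le> hh l lam mu th (Suc n) A u"
        unfolding hh_def term_k_def
        using lam_pos mu_pos th_pos Suc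
        by (intro sum_mono add_mono mult_left_mono) auto
    qed
  qed
qed

lemma E_bound: "0 \<le> t \<Longrightarrow> E n t A \<le> (\<Sum>k\<le>l. mu k) * t"
proof (induction n arbitrary: t A)
  case 0
  then show ?case using mu_pos by (simp, intro mult_nonneg_nonneg sum_nonneg) (auto simp: less_imp_le)
next
  case (Suc n)
  define M where "M = (\<Sum>k\<le>l. mu k)"
  define q where "q = acr_rate l lam mu th A"
  have "E (Suc n) t A = cnv q (hh l lam mu th n A) t" unfolding q_def by (rule E_Suc)
  also have "\<dots> \<le> cnv q (\<lambda>u. M + q * M * u) t"
  proof (rule cnv_mono[OF hh_cont])
    show "continuous_on {0..t} (\<lambda>u. M + q * M * u)" by (intro continuous_intros)
    fix u assume u: "u \<in> {0..t}"
    have "hh l lam mu th n A u \<le> (\<Sum>k\<le>l. mu k + (lam k + mu k + th * real (A k)) * (M * u))"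
      unfolding hh_def term_k_def
    proof (rule sum_mono)
      fix k assume k: "k \<in> {..l}"
      have b1: "E n u X \<le> M * u" for X using Suc.IH[of u X] u by (simp add: M_def)
      have f1: "real (fst (acr_job k A)) \<le> 1" by (simp add: acr_job_def)
      have "lam k * E n u (A(k := A k + 1)) \<le> lam k * (M * u)"
        using lam_pos k b1 by (intro mult_left_mono) auto
      moreover have "mu k * (real (fst (acr_job k A)) + E n u (snd (acr_job k A))) \<le> mu k * (1 + M * u)"
        using mu_pos k b1 f1 by (intro mult_left_mono add_mono) auto
      moreover have "th * real (A k) * E n u (A(k := A k - 1)) \<le> th * real (A k) * (M * u)"
        using th_pos b1 by (intro mult_left_mono) auto
      ultimately show "lam k * E n u (A(k := A k + 1)) + mu k * (real (fst (acr_job k A)) + E n u (snd (acr_job k A)))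
           + th * real (A k) * E n u (A(k := A k - 1)) \<le> mu k + (lam k + mu k + th * real (A k)) * (M * u)"
        by (simp add: algebra_simps)
    qed
    also have "\<dots> = M + q * M * u"
      by (simp add: sum.distrib M_def q_def rate_eq sum_distrib_right[symmetric] mult.assoc)
    finally show "hh l lam mu th n A u \<le> M + q * M * u" .
  qed
  also have "\<dots> = M * t" by (rule cnv_lin[OF Suc.prems])
  finally show ?case by (simp add: M_def)
qed

lemma pk1:
  assumes IH1: "\<And>X u. E n u (add_unit X 0) \<le> 1 + E n u X" and k: "k \<le> l"
  shows "term_k l lam mu th n u (add_unit A 0) k \<le> lam k + mu k + th * real (A k) + term_k l lam mu th n u A k
           + (if k = 0 then th + th * E (Suc n) u A else 0)"
proof -
  define A' where "A' = add_unit A 0"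
  have lk: "lam k > 0" "mu k > 0" using k lam_pos mu_pos by auto
  have a: "lam k * E n u (A'(k := A' k + 1)) \<le> lam k * (1 + E n u (A(k := A k + 1)))"
  proof -
    have "A'(k := A' k + 1) = add_unit (A(k := A k + 1)) 0"
      by (auto simp: A'_def add_unit_def fun_eq_iff)
    then show ?thesis using IH1 lk by (intro mult_left_mono) auto
  qed
  have b: "real (fst (acr_job k A')) + E n u (snd (acr_job k A'))
      \<le> 1 + (real (fst (acr_job k A)) + E n u (snd (acr_job k A)))"
  proof (cases "k = 0")
    case True
    have j': "acr_job k A' = (1, A)" using True
      by (auto simp: acr_job_def A'_def add_unit_def fun_eq_iff)
    show ?thesis
    proof (cases "A 0 > 0")
      case pos: True
      have j: "acr_job k A = (1, A(0 := A 0 - 1))" using True pos by (simp add: acr_job_def)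
      have "A = add_unit (A(0 := A 0 - 1)) 0" using pos by (auto simp: add_unit_def fun_eq_iff)
      then have "E n u A \<le> 1 + E n u (A(0 := A 0 - 1))" using IH1 by metis
      then show ?thesis by (simp add: j j')
    next
      case False
      then have j: "acr_job k A = (0, A)" using True by (simp add: acr_job_def)
      show ?thesis by (simp add: j j')
    qed
  next
    case k0: False
    show ?thesis
    proof (cases "A k > 0")
      case True
      have j': "acr_job k A' = (1, add_unit (A(k := A k - 1)) 0)" using True k0
        by (auto simp: acr_job_def A'_def add_unit_def fun_eq_iff)
      have j: "acr_job k A = (1, A(k := A k - 1))" using True by (simp add: acr_job_def)
      show ?thesis using IH1[of u "A(k := A k - 1)"] by (simp add: j j')
    next
      case False
      have j': "acr_job k A' = (1, A)" using False k0
        by (auto simp: acr_job_def A'_def add_unit_def fun_eq_iff)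
      show ?thesis
      proof (cases "A 0 > 0")
        case pos: True
        have j: "acr_job k A = (1, A(0 := A 0 - 1))" using False pos by (simp add: acr_job_def)
        have "A = add_unit (A(0 := A 0 - 1)) 0" using pos by (auto simp: add_unit_def fun_eq_iff)
        then have "E n u A \<le> 1 + E n u (A(0 := A 0 - 1))" using IH1 by metis
        then show ?thesis by (simp add: j j')
      next
        case npos: False
        then have j: "acr_job k A = (0, A)" using False by (simp add: acr_job_def)
        show ?thesis by (simp add: j j')
      qed
    qed
  qed
  have b': "mu k * (real (fst (acr_job k A')) + E n u (snd (acr_job k A')))
      \<le> mu k * (1 + (real (fst (acr_job k A)) + E n u (snd (acr_job k A))))"
    using b lk by (intro mult_left_mono) auto
  have c: "th * real (A' k) * E n u (A'(k := A' k - 1))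
      \<le> th * real (A k) + th * real (A k) * E n u (A(k := A k - 1)) + (if k = 0 then th + th * E (Suc n) u A else 0)"
  proof (cases "k = 0")
    case True
    have s1: "A'(0 := A' 0 - 1) = A" "A' 0 = A 0 + 1" "A'(0 := A 0) = A" by (auto simp: A'_def add_unit_def fun_eq_iff)
    have d1: "th * real (A 0) * E n u A \<le> th * real (A 0) * (1 + E n u (A(0 := A 0 - 1)))"
    proof (cases "A 0 > 0")
      case True
      have "A = add_unit (A(0 := A 0 - 1)) 0" using True by (auto simp: add_unit_def fun_eq_iff)
      then have "E n u A \<le> 1 + E n u (A(0 := A 0 - 1))" using IH1 by metis
      then show ?thesis using th_pos by (intro mult_left_mono) auto
    qed simp
    have d1': "th * real (A 0) * E n u A \<le> th * real (A 0) + th * real (A 0) * E n u (A(0 := A 0 - 1))"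
      using d1 by (simp add: distrib_left)
    have d2: "th * E n u A \<le> th + th * E (Suc n) u A"
    proof -
      have "th * E n u A \<le> th * E (Suc n) u A"
        by (rule mult_left_mono[OF E_mono less_imp_le[OF th_pos]])
      then show ?thesis using th_pos by linarith
    qed
    have eq: "th * real (A' 0) * E n u (A'(0 := A' 0 - 1)) = th * real (A 0) * E n u A + th * E n u A"
      by (simp add: s1(2,3) algebra_simps)
    have "th * real (A' 0) * E n u (A'(0 := A' 0 - 1))
      \<le> th * real (A 0) + th * real (A 0) * E n u (A(0 := A 0 - 1)) + (th + th * E (Suc n) u A)"
      using eq d1' d2 by linarith
    then show ?thesis using True by simp
  next
    case False
    have s1: "A' k = A k" "A'(k := A k - 1) = add_unit (A(k := A k - 1)) 0" using False
      by (auto simp: A'_def add_unit_def fun_eq_iff)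
    have "th * real (A k) * E n u (add_unit (A(k := A k - 1)) 0) \<le> th * real (A k) * (1 + E n u (A(k := A k - 1)))"
      using IH1 th_pos by (intro mult_left_mono) auto
    then have i1: "th * real (A k) * E n u (add_unit (A(k := A k - 1)) 0) \<le> th * real (A k) + th * real (A k) * E n u (A(k := A k - 1))"
      by (simp add: distrib_left)
    have "th * real (A' k) * E n u (A'(k := A' k - 1)) = th * real (A k) * E n u (add_unit (A(k := A k - 1)) 0)"
      by (simp only: s1)
    then have "th * real (A' k) * E n u (A'(k := A' k - 1)) \<le> th * real (A k) + th * real (A k) * E n u (A(k := A k - 1)) + 0"
      using i1 by linarith
    then show ?thesis using False by simp
  qed
  show ?thesis
    using a b' c unfolding term_k_def A'_def[symmetric] by (simp add: algebra_simps)
qed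

lemma pk2:
  assumes IH1: "\<And>X u. E n u (add_unit X 0) \<le> 1 + E n u X"
    and IH2: "\<And>X u j. j \<le> l \<Longrightarrow> E n u (add_unit X j) \<le> E n u (add_unit X 0)"
    and i: "i \<le> l" "i \<noteq> 0" and k: "k \<le> l"
  shows "term_k l lam mu th n u (add_unit A i) k \<le> term_k l lam mu th n u (add_unit A 0) k
           + (if k = i then th * E n u A else if k = 0 then - (th * E n u A) else 0)"
proof -
  define A' where "A' = add_unit A 0"
  define A'' where "A'' = add_unit A i"
  have lk: "lam k > 0" "mu k > 0" using k lam_pos mu_pos by auto
  have P3: "E n u A'' \<le> 1 + E n u A"
    using IH1[of u A] IH2[OF i(1), of u A] unfolding A''_def by linarith
  have a: "lam k * E n u (A''(k := A'' k + 1)) \<le> lam k * E n u (A'(k := A' k + 1))"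
  proof -
    have "A''(k := A'' k + 1) = add_unit (A(k := A k + 1)) i"
      "A'(k := A' k + 1) = add_unit (A(k := A k + 1)) 0"
      by (auto simp: A'_def A''_def add_unit_def fun_eq_iff)
    then show ?thesis using IH2[OF i(1)] lk by (intro mult_left_mono) auto
  qed
  have zero_case: "real (fst (acr_job k A'')) + E n u (snd (acr_job k A'')) \<le> 1 + E n u A"
    if "acr_job k A'' = (if A 0 > 0 then (1, A''(0 := A 0 - 1)) else (0, A''))"
  proof (cases "A 0 > 0")
    case True
    have e: "A''(0 := A 0 - 1) = add_unit (A(0 := A 0 - 1)) i" "A = add_unit (A(0 := A 0 - 1)) 0"
      using True i by (auto simp: A''_def add_unit_def fun_eq_iff)
    have "E n u (add_unit (A(0 := A 0 - 1)) i) \<le> E n u (add_unit (A(0 := A 0 - 1)) 0)"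
      by (rule IH2[OF i(1)])
    then show ?thesis using that True by (simp only: e[symmetric]) simp
  next
    case False
    then show ?thesis using that P3 by simp
  qed
  have b: "real (fst (acr_job k A'')) + E n u (snd (acr_job k A''))
      \<le> real (fst (acr_job k A')) + E n u (snd (acr_job k A'))"
  proof (cases "k = i")
    case True
    have j'': "acr_job k A'' = (1, A)" using True
      by (auto simp: acr_job_def A''_def add_unit_def fun_eq_iff)
    show ?thesis
    proof (cases "A i > 0")
      case pos: True
      have j': "acr_job k A' = (1, add_unit (A(i := A i - 1)) 0)" using True pos i
        by (auto simp: acr_job_def A'_def add_unit_def fun_eq_iff)
      have "A = add_unit (A(i := A i - 1)) i" using pos by (auto simp: add_unit_def fun_eq_iff)
      then have "E n u A \<le> E n u (add_unit (A(i := A i - 1)) 0)" using IH2[OF i(1)] by metis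
      then show ?thesis by (simp add: j' j'')
    next
      case False
      have j': "acr_job k A' = (1, A)" using True False i
        by (auto simp: acr_job_def A'_def add_unit_def fun_eq_iff)
      show ?thesis by (simp add: j' j'')
    qed
  next
    case ki: False
    show ?thesis
    proof (cases "k = 0")
      case True
      have j': "acr_job k A' = (1, A)" using True
        by (auto simp: acr_job_def A'_def add_unit_def fun_eq_iff)
      have "acr_job k A'' = (if A 0 > 0 then (1, A''(0 := A 0 - 1)) else (0, A''))"
        using True i by (auto simp: acr_job_def A''_def add_unit_def)
      from zero_case[OF this] show ?thesis by (simp add: j')
    next
      case k0: False
      show ?thesis
      proof (cases "A k > 0")
        case True
        have j': "acr_job k A' = (1, add_unit (A(k := A k - 1)) 0)"
          "acr_job k A'' = (1, add_unit (A(k := A k - 1)) i)" using True k0 ki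
          by (auto simp: acr_job_def A'_def A''_def add_unit_def fun_eq_iff)
        show ?thesis using IH2[OF i(1), of u "A(k := A k - 1)"] by (simp add: j')
      next
        case False
        have j': "acr_job k A' = (1, A)" using False k0 ki
          by (auto simp: acr_job_def A'_def add_unit_def fun_eq_iff)
        have "acr_job k A'' = (if A 0 > 0 then (1, A''(0 := A 0 - 1)) else (0, A''))"
          using False k0 ki i by (auto simp: acr_job_def A''_def add_unit_def)
        from zero_case[OF this] show ?thesis by (simp add: j')
      qed
    qed
  qed
  have b': "mu k * (real (fst (acr_job k A'')) + E n u (snd (acr_job k A'')))
      \<le> mu k * (real (fst (acr_job k A')) + E n u (snd (acr_job k A')))"
    using b lk by (intro mult_left_mono) auto
  have c: "th * real (A'' k) * E n u (A''(k := A'' k - 1))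
      \<le> th * real (A' k) * E n u (A'(k := A' k - 1))
         + (if k = i then th * E n u A else if k = 0 then - (th * E n u A) else 0)"
  proof (cases "k = i")
    case True
    have s: "A'' k = A i + 1" "A''(k := A i + 1 - 1) = A" "A' k = A i"
      "A'(k := A i - 1) = add_unit (A(i := A i - 1)) 0"
      using True i by (auto simp: A'_def A''_def add_unit_def fun_eq_iff)
    have d: "th * real (A i) * E n u A \<le> th * real (A i) * E n u (add_unit (A(i := A i - 1)) 0)"
    proof (cases "A i > 0")
      case True
      have "A = add_unit (A(i := A i - 1)) i" using True by (auto simp: add_unit_def fun_eq_iff)
      then have "E n u A \<le> E n u (add_unit (A(i := A i - 1)) 0)" using IH2[OF i(1)] by metis
      then show ?thesis using th_pos by (intro mult_left_mono) auto
    qed simp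
    have "th * real (A'' k) * E n u (A''(k := A'' k - 1)) = th * real (A i) * E n u A + th * E n u A"
      by (simp only: s) (simp add: algebra_simps)
    moreover have "th * real (A' k) * E n u (A'(k := A' k - 1)) = th * real (A i) * E n u (add_unit (A(i := A i - 1)) 0)"
      by (simp only: s)
    moreover have "(if k = i then th * E n u A else if k = 0 then - (th * E n u A) else 0) = th * E n u A"
      using True by simp
    ultimately show ?thesis using d by linarith
  next
    case ki: False
    show ?thesis
    proof (cases "k = 0")
      case True
      have s: "A'' k = A 0" "A''(k := A 0 - 1) = add_unit (A(0 := A 0 - 1)) i" "A' k = A 0 + 1"
        "A'(k := A 0 + 1 - 1) = A"
        using True i by (auto simp: A'_def A''_def add_unit_def fun_eq_iff)
      have d: "th * real (A 0) * E n u (add_unit (A(0 := A 0 - 1)) i) \<le> th * real (A 0) * E n u A"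
      proof (cases "A 0 > 0")
        case True
        have "A = add_unit (A(0 := A 0 - 1)) 0" using True by (auto simp: add_unit_def fun_eq_iff)
        then have "E n u (add_unit (A(0 := A 0 - 1)) i) \<le> E n u A" using IH2[OF i(1)] by metis
        then show ?thesis using th_pos by (intro mult_left_mono) auto
      qed simp
      have "th * real (A'' k) * E n u (A''(k := A'' k - 1)) = th * real (A 0) * E n u (add_unit (A(0 := A 0 - 1)) i)"
        by (simp only: s)
      moreover have "th * real (A' k) * E n u (A'(k := A' k - 1)) = th * real (A 0) * E n u A + th * E n u A"
        by (simp only: s) (simp add: algebra_simps)
      moreover have "(if k = i then th * E n u A else if k = 0 then - (th * E n u A) else 0) = - (th * E n u A)"
        using True ki by simp
      ultimately show ?thesis using d by linarith
    next
      case k0: False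
      have s: "A'' k = A k" "A' k = A k" "A''(k := A k - 1) = add_unit (A(k := A k - 1)) i"
        "A'(k := A k - 1) = add_unit (A(k := A k - 1)) 0"
        using k0 ki by (auto simp: A'_def A''_def add_unit_def fun_eq_iff)
      have d: "th * real (A k) * E n u (add_unit (A(k := A k - 1)) i) \<le> th * real (A k) * E n u (add_unit (A(k := A k - 1)) 0)"
        using IH2[OF i(1)] th_pos by (intro mult_left_mono) auto
      have "th * real (A'' k) * E n u (A''(k := A'' k - 1)) = th * real (A k) * E n u (add_unit (A(k := A k - 1)) i)"
        "th * real (A' k) * E n u (A'(k := A' k - 1)) = th * real (A k) * E n u (add_unit (A(k := A k - 1)) 0)"
        by (simp only: s)+
      moreover have "(if k = i then th * E n u A else if k = 0 then - (th * E n u A) else 0) = 0"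
        using k0 ki by simp
      ultimately show ?thesis using d by linarith
    qed
  qed
  show ?thesis
    using a b' c unfolding term_k_def A'_def[symmetric] A''_def[symmetric] by (simp add: algebra_simps)
qed

lemma props:
  "(\<forall>X u. E n u (add_unit X 0) \<le> 1 + E n u X) \<and>
   (\<forall>X u j. j \<le> l \<longrightarrow> E n u (add_unit X j) \<le> E n u (add_unit X 0))"
proof (induction n)
  case 0
  then show ?case by simp
next
  case (Suc n)
  have IH1: "\<And>X u. E n u (add_unit X 0) \<le> 1 + E n u X" using Suc by blast
  have IH2: "\<And>X u j. j \<le> l \<Longrightarrow> E n u (add_unit X j) \<le> E n u (add_unit X 0)" using Suc by blast
  have Q1: "E (Suc n) u (add_unit X 0) \<le> 1 + E (Suc n) u X" for X u
  proof (cases "u < 0")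
    case True
    then show ?thesis by (simp add: E_neg)
  next
    case False
    define q where "q = acr_rate l lam mu th X"
    have "E (Suc n) u (add_unit X 0) = cnv (q + th) (hh l lam mu th n (add_unit X 0)) u"
      unfolding q_def by (simp only: E_Suc rate_add[OF le0])
    also have "\<dots> \<le> 1 + cnv q (hh l lam mu th n X) u"
    proof (rule cnv_compare)
      fix v assume v: "v \<in> {0..u}"
      have "hh l lam mu th n (add_unit X 0) v \<le>
        (\<Sum>k\<le>l. (lam k + mu k + th * real (X k)) + term_k l lam mu th n v X k
           + (if k = 0 then th + th * E (Suc n) v X else 0))"
        unfolding hh_def by (rule sum_mono) (rule pk1[OF IH1], simp)
      also have "\<dots> = q + hh l lam mu th n X v + (th + th * E (Suc n) v X)"
        by (simp add: sum.distrib q_def rate_eq hh_def)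
      also have "\<dots> = (q + th) * 1 + hh l lam mu th n X v + th * cnv q (hh l lam mu th n X) v"
        using E_Suc[of l lam mu th n v X] by (simp add: q_def)
      finally show "hh l lam mu th n (add_unit X 0) v \<le> (q + th) * 1 + hh l lam mu th n X v + th * cnv q (hh l lam mu th n X) v" .
    qed (use False in \<open>auto intro: hh_cont\<close>)
    also have "\<dots> = 1 + E (Suc n) u X" unfolding q_def by (simp only: E_Suc)
    finally show ?thesis .
  qed
  have Q2: "E (Suc n) u (add_unit X j) \<le> E (Suc n) u (add_unit X 0)" if j: "j \<le> l" for X u j
  proof (cases "j = 0 \<or> u < 0")
    case True
    then show ?thesis by (auto simp: E_neg)
  next
    case False
    define q where "q = acr_rate l lam mu th X"
    have "E (Suc n) u (add_unit X j) = cnv (q + th) (hh l lam mu th n (add_unit X j)) u"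
      unfolding q_def by (simp only: E_Suc rate_add[OF j])
    also have "\<dots> \<le> cnv (q + th) (hh l lam mu th n (add_unit X 0)) u"
    proof (rule cnv_mono[OF hh_cont hh_cont])
      fix v assume v: "v \<in> {0..u}"
      have "hh l lam mu th n (add_unit X j) v \<le>
        (\<Sum>k\<le>l. term_k l lam mu th n v (add_unit X 0) k
           + ((if k = j then th * E n v X else 0) + (if k = 0 then - (th * E n v X) else 0)))"
        unfolding hh_def
      proof (rule sum_mono)
        fix k assume "k \<in> {..l}"
        then show "term_k l lam mu th n v (add_unit X j) k \<le> term_k l lam mu th n v (add_unit X 0) k
           + ((if k = j then th * E n v X else 0) + (if k = 0 then - (th * E n v X) else 0))"
          using pk2[OF IH1 IH2 j, of k v X] False by auto
      qed
      also have "\<dots> = hh l lam mu th n (add_unit X 0) v"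
        using j by (simp add: sum.distrib hh_def)
      finally show "hh l lam mu th n (add_unit X j) v \<le> hh l lam mu th n (add_unit X 0) v" .
    qed
    also have "\<dots> = E (Suc n) u (add_unit X 0)"
      unfolding q_def by (simp only: E_Suc rate_add[OF le0])
    finally show ?thesis .
  qed
  show ?case using Q1 Q2 by blast
qed

end


theorem lemma1:
  fixes l :: nat and lam mu :: "nat \<Rightarrow> real" and th T :: real
    and A :: "nat \<Rightarrow> nat" and i :: nat
  assumes "\<forall>k\<le>l. lam k > 0" and "\<forall>k\<le>l. mu k > 0" and "th > 0"
    and "T \<ge> 0" and "\<forall>k>l. A k = 0" and "i \<le> l"
  shows "1 + acr_EM l lam mu th T A \<ge> acr_EM l lam mu th T (add_unit A 0)
       \<and> acr_EM l lam mu th T (add_unit A 0) \<ge> acr_EM l lam mu th T (add_unit A i)"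
proof -
  have bdd: "bdd_above (range (\<lambda>n. acr_EM_n l lam mu th n T X))" for X
    using E_bound[OF assms(1,2,3) assms(4)] by (intro bdd_aboveI) auto
  have up: "acr_EM_n l lam mu th n T X \<le> acr_EM l lam mu th T X" for n X
    unfolding acr_EM_def by (rule cSUP_upper[OF _ bdd]) simp
  have pr: "acr_EM_n l lam mu th n T (add_unit X 0) \<le> 1 + acr_EM_n l lam mu th n T X"
    "acr_EM_n l lam mu th n T (add_unit X i) \<le> acr_EM_n l lam mu th n T (add_unit X 0)" for n X
    using props[OF assms(1,2,3), of n] assms(6) by blast+
  have 1: "acr_EM l lam mu th T (add_unit A 0) \<le> 1 + acr_EM l lam mu th T A"
    unfolding acr_EM_def[of l lam mu th T "add_unit A 0"]
  proof (rule cSUP_least)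
    fix n
    show "acr_EM_n l lam mu th n T (add_unit A 0) \<le> 1 + acr_EM l lam mu th T A"
      using pr(1)[of n A] up[of n A] by linarith
  qed simp
  have 2: "acr_EM l lam mu th T (add_unit A i) \<le> acr_EM l lam mu th T (add_unit A 0)"
    unfolding acr_EM_def[of l lam mu th T "add_unit A i"]
  proof (rule cSUP_least)
    fix n
    show "acr_EM_n l lam mu th n T (add_unit A i) \<le> acr_EM l lam mu th T (add_unit A 0)"
      using pr(2)[of n A] up[of n "add_unit A 0"] by linarith
  qed simp
  show ?thesis using 1 2 by simp
qed

end
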